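(* Let $A:\mathbb R^n\rightrightarrows\mathbb R^n$ be maximally monotone, $F:\mathbb R^n\to\mathbb R^n$ $L$-Lipschitz ($L>0$), $T=A+F$, and assume there exist a nonempty $\mathcal S^\star\subseteq\operatorname{zer}T$ and $\rho\in(-\tfrac1{2L},\infty)$ with $\langle v,z-z^\star\rangle\ge\rho\|v\|^2$ for all $z^\star\in\mathcal S^\star$ and all $(z,v)\in\operatorname{graph}T$. Let $\gamma\in(\max\{0,-2\rho\},\tfrac1L]$, $\delta\in(-\tfrac\gamma2,\rho]$ and $\bar\alpha\in(0,1+\tfrac{2\delta}{\gamma})$, let $H=\mathrm{id}-\gamma F$, and for $z^0\in\mathbb R^n$ generate $$\bar z^k=(\mathrm{id}+\gamma A)^{-1}(z^k-\gamma Fz^k),\qquad z^{k+1}=z^k+\bar\alpha(H\bar z^k-Hz^k).$$ Then for every $z^\star\in\mathcal S^\star$ and $m\ge0$, $$\min_{k=0,\dots,m}\|H\bar z^k-Hz^k\|^2\le\frac{\|z^0-z^\star\|^2}{\kappa(m+1)},\qquad \kappa=\bar\alpha\big(1+\tfrac{2\delta}{\gamma}-\bar\alpha\big).$$ Moreover, $(\bar z^k)$ is bounded with all limit points in $\operatorname{zer}T$, and if in addition $\gamma<\tfrac1L$ and $\mathcal S^\star=\operatorname{zer}T$, then $(z^k)$ and $(\bar z^k)$ converge to the same point of $\operatorname{zer}T$.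
   Context: $\operatorname{zer}T=\{z:0\in Tz\}$, $\operatorname{graph}T=\{(z,v):v\in Tz\}$. *)

theory Defs
  imports "HOL-Analysis.Analysis"
begin

definition graph_op :: "('a \<Rightarrow> 'b set) \<Rightarrow> ('a \<times> 'b) set" where
  "graph_op T = {(z, v). v \<in> T z}"

definition zer_op :: "('a \<Rightarrow> 'a::zero set) \<Rightarrow> 'a set" where
  "zer_op T = {z. 0 \<in> T z}"

definition monotone_op :: "('a::real_inner \<Rightarrow> 'a set) \<Rightarrow> bool" where
  "monotone_op A \<longleftrightarrow>
     (\<forall>(x, u) \<in> graph_op A. \<forall>(y, v) \<in> graph_op A. inner (u - v) (x - y) \<ge> 0)"

definition maximally_monotone :: "('a::real_inner \<Rightarrow> 'a set) \<Rightarrow> bool" where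
  "maximally_monotone A \<longleftrightarrow> monotone_op A \<and>
     (\<forall>x u. (\<forall>(y, v) \<in> graph_op A. inner (u - v) (x - y) \<ge> 0) \<longrightarrow> u \<in> A x)"

definition op_plus_fun :: "('a::plus \<Rightarrow> 'a set) \<Rightarrow> ('a \<Rightarrow> 'a) \<Rightarrow> 'a \<Rightarrow> 'a set" where
  "op_plus_fun A F z = (\<lambda>a. a + F z) ` A z"

end

theory Submission
  imports Defs
begin

lemma core1:
  fixes w g :: "'a::real_inner"
  assumes "norm g \<le> norm w"
  shows "inner (w - g) w \<ge> (norm (w - g))\<^sup>2 / 2"
proof -
  have e: "inner w g = ((norm w)\<^sup>2 + (norm g)\<^sup>2 - (norm (w - g))\<^sup>2) / 2"
    by (rule dot_norm_neg)
  have "inner (w - g) w = inner w w - inner g w" by (simp add: inner_diff_left)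
  also have "\<dots> = (norm w)\<^sup>2 - inner w g" by (simp add: inner_commute[of g w] power2_norm_eq_inner)
  finally have i: "inner (w - g) w = (norm w)\<^sup>2 - inner w g" .
  have "(norm g)\<^sup>2 \<le> (norm w)\<^sup>2" using assms by (simp add: power_mono)
  hence "(norm w)\<^sup>2 / 2 - (norm g)\<^sup>2 / 2 \<ge> 0" by simp
  moreover have "inner (w - g) w = (norm (w - g))\<^sup>2 / 2 + ((norm w)\<^sup>2 / 2 - (norm g)\<^sup>2 / 2)"
    unfolding i e by (simp add: field_simps)
  ultimately show ?thesis by linarith
qed

lemma resolvent_ne:
  fixes p e :: "'a::real_inner"
  assumes "inner (p - e) e \<ge> 0"
  shows "norm e \<le> norm p"
proof -
  have "(norm e)\<^sup>2 \<le> inner p e" using assms by (simp add: inner_diff_left power2_norm_eq_inner)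
  also have "\<dots> \<le> norm p * norm e" using norm_cauchy_schwarz by blast
  finally have "norm e * norm e \<le> norm p * norm e" by (simp add: power2_eq_square)
  thus ?thesis by (cases "norm e = 0") (auto simp: mult_le_cancel_right)
qed

lemma fejer_step:
  fixes zk zn d zs :: "'a::real_inner"
  assumes "zn = zk + \<alpha> *\<^sub>R d" "\<alpha> > 0"
    and "inner (-d) (zk - zs) \<ge> c * (norm d)\<^sup>2"
  shows "(norm (zn - zs))\<^sup>2 + \<alpha> * (2*c - \<alpha>) * (norm d)\<^sup>2 \<le> (norm (zk - zs))\<^sup>2"
proof -
  have zz: "zn - zs = (zk - zs) + \<alpha> *\<^sub>R d" using assms(1) by simp
  have "inner (zk - zs) (\<alpha> *\<^sub>R d) = ((norm ((zk - zs) + \<alpha> *\<^sub>R d))\<^sup>2 - (norm (zk - zs))\<^sup>2 - (norm (\<alpha> *\<^sub>R d))\<^sup>2) / 2"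
    by (rule dot_norm)
  hence "(norm (zn - zs))\<^sup>2 = (norm (zk - zs))\<^sup>2 + 2*\<alpha> * inner d (zk - zs) + \<alpha>\<^sup>2 * (norm d)\<^sup>2"
    unfolding zz by (simp add: inner_commute[of d] power_mult_distrib)
  moreover have "\<alpha> * inner d (zk - zs) \<le> - \<alpha> * c * (norm d)\<^sup>2"
    using mult_left_mono[OF assms(3), of \<alpha>] assms(2) by (simp add: inner_minus_left)
  ultimately show ?thesis by (simp add: power2_eq_square algebra_simps)
qed
theorem corollary3p2:
  fixes A :: "'a::euclidean_space \<Rightarrow> 'a set"
    and F :: "'a \<Rightarrow> 'a"
    and L \<rho> \<gamma> \<delta> \<alpha> :: real
    and S :: "'a set"
    and z zb :: "nat \<Rightarrow> 'a"
  assumes A_mm: "maximally_monotone A"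
    and L_pos: "L > 0"
    and F_lip: "L-lipschitz_on UNIV F"
    and S_ne: "S \<noteq> {}"
    and S_sub: "S \<subseteq> zer_op (op_plus_fun A F)"
    and \<rho>_lb: "\<rho> > - 1 / (2 * L)"
    and weak_mvi: "\<And>zs zz v. zs \<in> S \<Longrightarrow> (zz, v) \<in> graph_op (op_plus_fun A F) \<Longrightarrow>
                     inner v (zz - zs) \<ge> \<rho> * (norm v)\<^sup>2"
    and \<gamma>_lb: "\<gamma> > max 0 (- 2 * \<rho>)" and \<gamma>_ub: "\<gamma> \<le> 1 / L"
    and \<delta>_lb: "\<delta> > - \<gamma> / 2" and \<delta>_ub: "\<delta> \<le> \<rho>"
    and \<alpha>_lb: "\<alpha> > 0" and \<alpha>_ub: "\<alpha> < 1 + 2 * \<delta> / \<gamma>"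
    and zb_res: "\<And>k. (1 / \<gamma>) *\<^sub>R (z k - \<gamma> *\<^sub>R F (z k) - zb k) \<in> A (zb k)"
    and z_step: "\<And>k. z (Suc k) = z k + \<alpha> *\<^sub>R
                   ((zb k - \<gamma> *\<^sub>R F (zb k)) - (z k - \<gamma> *\<^sub>R F (z k)))"
  shows "(\<forall>zs \<in> S. \<forall>m::nat.
            Min ((\<lambda>k. (norm ((zb k - \<gamma> *\<^sub>R F (zb k)) - (z k - \<gamma> *\<^sub>R F (z k))))\<^sup>2) ` {0..m})
              \<le> (norm (z 0 - zs))\<^sup>2 / ((\<alpha> * (1 + 2 * \<delta> / \<gamma> - \<alpha>)) * (real m + 1)))
       \<and> bounded (range zb)
       \<and> (\<forall>x r. strict_mono r \<and> (zb \<circ> r) \<longlonglongrightarrow> x \<longrightarrow> x \<in> zer_op (op_plus_fun A F))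
       \<and> (\<gamma> < 1 / L \<and> S = zer_op (op_plus_fun A F) \<longrightarrow>
            (\<exists>x \<in> zer_op (op_plus_fun A F). z \<longlonglongrightarrow> x \<and> zb \<longlonglongrightarrow> x))"
proof -
  let ?H = "\<lambda>x. x - \<gamma> *\<^sub>R F x"
  define d where "d k = ?H (zb k) - ?H (z k)" for k
  define a where "a k = (1 / \<gamma>) *\<^sub>R (z k - \<gamma> *\<^sub>R F (z k) - zb k)" for k
  define \<kappa> where "\<kappa> = \<alpha> * (1 + 2 * \<delta> / \<gamma> - \<alpha>)"
  have g0: "\<gamma> > 0" using \<gamma>_lb by simp
  have gL: "\<gamma> * L \<le> 1" using \<gamma>_ub L_pos by (simp add: field_simps)
  have k0: "\<kappa> > 0" using \<alpha>_lb \<alpha>_ub unfolding \<kappa>_def by simp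
  have aA: "a k \<in> A (zb k)" for k using zb_res a_def by simp
  have ga: "\<gamma> *\<^sub>R a k = z k - \<gamma> *\<^sub>R F (z k) - zb k" for k using g0 by (simp add: a_def)
  have dv: "d k = - (\<gamma> *\<^sub>R (a k + F (zb k)))" for k
    unfolding d_def scaleR_add_right ga by (simp add: algebra_simps)
  have zstep: "z (Suc k) = z k + \<alpha> *\<^sub>R d k" for k using z_step d_def by simp
  have Flip: "norm (F x - F y) \<le> L * norm (x - y)" for x y
    using lipschitz_onD[OF F_lip] by (simp add: dist_norm)
  have vT: "(zb k, a k + F (zb k)) \<in> graph_op (op_plus_fun A F)" for k
    using aA by (auto simp: graph_op_def op_plus_fun_def)
  have key: "inner (- d k) (z k - zs) \<ge> (\<delta> / \<gamma> + 1/2) * (norm (d k))\<^sup>2" if zs: "zs \<in> S" for k zs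
  proof -
    let ?v = "a k + F (zb k)"
    have mvi: "inner ?v (zb k - zs) \<ge> \<rho> * (norm ?v)\<^sup>2" using weak_mvi[OF zs vT] .
    have nd: "(norm (d k))\<^sup>2 = \<gamma>\<^sup>2 * (norm ?v)\<^sup>2" using g0 by (simp add: dv power_mult_distrib)
    have i1: "inner (- d k) (zb k - zs) = \<gamma> * inner ?v (zb k - zs)" by (simp add: dv)
    have "\<gamma> * inner ?v (zb k - zs) \<ge> \<gamma> * (\<rho> * (norm ?v)\<^sup>2)" using mvi g0 by simp
    moreover have "\<gamma> * (\<rho> * (norm ?v)\<^sup>2) \<ge> \<gamma> * (\<delta> * (norm ?v)\<^sup>2)" using \<delta>_ub g0 by (simp add: mult_right_mono)
    moreover have "\<gamma> * (\<delta> * (norm ?v)\<^sup>2) = \<delta> / \<gamma> * (norm (d k))\<^sup>2" using g0 nd by (simp add: power2_eq_square field_simps)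
    ultimately have p1: "inner (- d k) (zb k - zs) \<ge> \<delta> / \<gamma> * (norm (d k))\<^sup>2" using i1 by linarith
    have ng: "norm (\<gamma> *\<^sub>R (F (z k) - F (zb k))) \<le> norm (z k - zb k)"
    proof -
      have "norm (\<gamma> *\<^sub>R (F (z k) - F (zb k))) = \<gamma> * norm (F (z k) - F (zb k))" using g0 by simp
      also have "\<dots> \<le> \<gamma> * (L * norm (z k - zb k))" using Flip g0 by (simp add: mult_left_mono)
      also have "\<dots> \<le> norm (z k - zb k)" using gL mult_right_mono[OF gL, of "norm (z k - zb k)"] by (simp add: mult.assoc)
      finally show ?thesis .
    qed
    have wg: "(z k - zb k) - \<gamma> *\<^sub>R (F (z k) - F (zb k)) = - d k"
      by (simp add: d_def algebra_simps)
    have p2: "inner (- d k) (z k - zb k) \<ge> (norm (d k))\<^sup>2 / 2" using core1[OF ng] unfolding wg by simp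
    have "inner (- d k) (z k - zs) = inner (- d k) (zb k - zs) + inner (- d k) (z k - zb k)"
      by (simp add: inner_diff_right)
    thus ?thesis using p1 p2 by (simp add: algebra_simps)
  qed
  have fej: "(norm (z (Suc k) - zs))\<^sup>2 + \<kappa> * (norm (d k))\<^sup>2 \<le> (norm (z k - zs))\<^sup>2" if "zs \<in> S" for k zs
    using fejer_step[OF zstep \<alpha>_lb key[OF that]] unfolding \<kappa>_def by (simp add: algebra_simps)
  have dec: "norm (z n - zs) \<le> norm (z k - zs)" if "zs \<in> S" "k \<le> n" for k n zs
  proof -
    have "norm (z (Suc j) - zs) \<le> norm (z j - zs)" for j
    proof -
      have "(norm (z (Suc j) - zs))\<^sup>2 \<le> (norm (z j - zs))\<^sup>2"
        using fej[OF that(1), of j] k0 by (smt (verit) mult_nonneg_nonneg zero_le_power2)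
      thus ?thesis by (rule power2_le_imp_le) simp
    qed
    hence "decseq (\<lambda>j. norm (z j - zs))" by (rule decseq_SucI)
    thus ?thesis using that(2) by (simp add: decseq_def)
  qed
  have tele: "\<kappa> * (\<Sum>k<n. (norm (d k))\<^sup>2) + (norm (z n - zs))\<^sup>2 \<le> (norm (z 0 - zs))\<^sup>2"
    if "zs \<in> S" for n zs
  proof (induction n)
    case 0 then show ?case by simp
  next
    case (Suc n)
    then show ?case using fej[OF that, of n] by (simp add: algebra_simps)
  qed
  have sumb: "(\<Sum>k<n. (norm (d k))\<^sup>2) \<le> (norm (z 0 - zs))\<^sup>2 / \<kappa>" if "zs \<in> S" for n zs
  proof -
    have "\<kappa> * (\<Sum>k<n. (norm (d k))\<^sup>2) \<le> (norm (z 0 - zs))\<^sup>2" using tele[OF that, of n]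
      by (smt (verit) zero_le_power2)
    thus ?thesis using k0 by (simp add: field_simps mult.commute)
  qed
  have part1: "\<forall>zs \<in> S. \<forall>m::nat.
            Min ((\<lambda>k. (norm ((zb k - \<gamma> *\<^sub>R F (zb k)) - (z k - \<gamma> *\<^sub>R F (z k))))\<^sup>2) ` {0..m})
              \<le> (norm (z 0 - zs))\<^sup>2 / ((\<alpha> * (1 + 2 * \<delta> / \<gamma> - \<alpha>)) * (real m + 1))"
  proof (intro ballI allI)
    fix zs m assume zs: "zs \<in> S"
    let ?f = "\<lambda>k. (norm (d k))\<^sup>2"
    have fe: "(\<lambda>k. (norm ((zb k - \<gamma> *\<^sub>R F (zb k)) - (z k - \<gamma> *\<^sub>R F (z k))))\<^sup>2) = ?f"
      by (simp add: d_def)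
    let ?M = "Min (?f ` {0..m})"
    have "?M \<le> ?f k" if "k \<in> {0..m}" for k using that by simp
    hence "(\<Sum>k\<in>{0..m}. ?M) \<le> (\<Sum>k\<in>{0..m}. ?f k)" by (rule sum_mono)
    moreover have "(\<Sum>k\<in>{0..m}. ?f k) = (\<Sum>k<Suc m. ?f k)" by (rule sum.cong) auto
    ultimately have "(real m + 1) * ?M \<le> (\<Sum>k<Suc m. ?f k)" by (simp add: add.commute)
    also have "\<dots> \<le> (norm (z 0 - zs))\<^sup>2 / \<kappa>" by (rule sumb[OF zs])
    finally have "(real m + 1) * ?M \<le> (norm (z 0 - zs))\<^sup>2 / \<kappa>" .
    hence "\<kappa> * ((real m + 1) * ?M) \<le> \<kappa> * ((norm (z 0 - zs))\<^sup>2 / \<kappa>)" using k0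
      by (intro mult_left_mono) auto
    hence h1: "?M * (\<kappa> * (real m + 1)) \<le> (norm (z 0 - zs))\<^sup>2" using k0
      by (simp add: ac_simps)
    have h2: "\<kappa> * (real m + 1) > 0" using k0 by simp
    have "?M \<le> (norm (z 0 - zs))\<^sup>2 / (\<kappa> * (real m + 1))"
      using h1 pos_le_divide_eq[OF h2] by blast
    thus "Min ((\<lambda>k. (norm ((zb k - \<gamma> *\<^sub>R F (zb k)) - (z k - \<gamma> *\<^sub>R F (z k))))\<^sup>2) ` {0..m})
              \<le> (norm (z 0 - zs))\<^sup>2 / ((\<alpha> * (1 + 2 * \<delta> / \<gamma> - \<alpha>)) * (real m + 1))"
      unfolding fe \<kappa>_def .
  qed
  obtain zs where zs: "zs \<in> S" using S_ne by blast
  have mono: "monotone_op A" using A_mm by (simp add: maximally_monotone_def)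
  have monoD: "inner (u - v) (x - y) \<ge> 0" if "u \<in> A x" "v \<in> A y" for u v x y
  proof -
    have g: "(x, u) \<in> graph_op A" "(y, v) \<in> graph_op A" using that by (simp_all add: graph_op_def)
    from mono have "\<forall>(x, u) \<in> graph_op A. \<forall>(y, v) \<in> graph_op A. inner (u - v) (x - y) \<ge> 0"
      by (simp add: monotone_op_def)
    thus ?thesis using g by blast
  qed
  have zer_iff: "x \<in> zer_op (op_plus_fun A F) \<longleftrightarrow> - F x \<in> A x" for x
  proof
    assume "x \<in> zer_op (op_plus_fun A F)"
    then obtain b where b: "b \<in> A x" "0 = b + F x" by (auto simp: zer_op_def op_plus_fun_def)
    hence "b = - F x" by (simp add: eq_neg_iff_add_eq_0)
    thus "- F x \<in> A x" using b by simp
  next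
    assume "- F x \<in> A x"
    hence "0 \<in> (\<lambda>b. b + F x) ` A x" by (rule rev_image_eqI) simp
    thus "x \<in> zer_op (op_plus_fun A F)" by (simp add: zer_op_def op_plus_fun_def)
  qed
  have zsA: "- F zs \<in> A zs" using zs S_sub zer_iff by blast
  have zbb: "norm (zb k - zs) \<le> (1 + \<gamma> * L) * norm (z k - zs)" for k
  proof -
    let ?p = "(z k - \<gamma> *\<^sub>R F (z k)) - (zs - \<gamma> *\<^sub>R F zs)"
    let ?e = "zb k - zs"
    have "?p - ?e = \<gamma> *\<^sub>R (a k - (- F zs))" unfolding scaleR_diff_right ga by (simp add: algebra_simps)
    hence "inner (?p - ?e) ?e = \<gamma> * inner (a k - (- F zs)) (zb k - zs)" by simp
    moreover have "inner (a k - (- F zs)) (zb k - zs) \<ge> 0" using monoD[OF aA zsA] .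
    ultimately have "inner (?p - ?e) ?e \<ge> 0" using g0 by simp
    hence "norm ?e \<le> norm ?p" by (rule resolvent_ne)
    also have "?p = (z k - zs) - \<gamma> *\<^sub>R (F (z k) - F zs)" by (simp add: algebra_simps)
    also have "norm \<dots> \<le> norm (z k - zs) + \<gamma> * norm (F (z k) - F zs)" using g0
      by (metis abs_of_pos norm_scaleR norm_triangle_ineq4)
    also have "\<dots> \<le> norm (z k - zs) + \<gamma> * (L * norm (z k - zs))" using Flip g0 by (simp add: mult_left_mono)
    finally show ?thesis by (simp add: algebra_simps)
  qed
  have zbnd: "norm (z k - zs) \<le> norm (z 0 - zs)" for k using dec[OF zs] by simp
  have part2: "bounded (range zb)"
  proof -
    have "range zb \<subseteq> cball zs ((1 + \<gamma> * L) * norm (z 0 - zs))"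
    proof
      fix y assume "y \<in> range zb" then obtain k where y: "y = zb k" by blast
      have "norm (zb k - zs) \<le> (1 + \<gamma> * L) * norm (z 0 - zs)"
        using zbb[of k] mult_left_mono[OF zbnd[of k], of "1 + \<gamma> * L"] g0 L_pos
        by (smt (verit) mult_nonneg_nonneg)
      thus "y \<in> cball zs ((1 + \<gamma> * L) * norm (z 0 - zs))" by (simp add: y dist_norm norm_minus_commute)
    qed
    thus ?thesis using bounded_cball bounded_subset by blast
  qed
  have dlim: "d \<longlonglongrightarrow> 0"
  proof -
    have "summable (\<lambda>k. (norm (d k))\<^sup>2)"
      by (rule summableI_nonneg_bounded[where x="(norm (z 0 - zs))\<^sup>2 / \<kappa>"]) (auto intro: sumb[OF zs])
    hence "(\<lambda>k. (norm (d k))\<^sup>2) \<longlonglongrightarrow> 0" by (rule summable_LIMSEQ_zero)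
    hence "(\<lambda>k. sqrt ((norm (d k))\<^sup>2)) \<longlonglongrightarrow> sqrt 0" by (rule tendsto_real_sqrt)
    hence "(\<lambda>k. norm (d k)) \<longlonglongrightarrow> 0" by simp
    thus ?thesis by (simp add: tendsto_norm_zero_iff)
  qed
  have Fcont: "isCont F x" for x
    using lipschitz_on_continuous_on[OF F_lip] by (simp add: continuous_on_eq_continuous_at)
  have part3: "\<forall>x r. strict_mono r \<and> (zb \<circ> r) \<longlonglongrightarrow> x \<longrightarrow> x \<in> zer_op (op_plus_fun A F)"
  proof (intro allI impI, elim conjE)
    fix x r assume r: "strict_mono (r::nat\<Rightarrow>nat)" and lim: "(zb \<circ> r) \<longlonglongrightarrow> x"
    have ak: "a k = - ((1/\<gamma>) *\<^sub>R d k) - F (zb k)" for k using g0 by (simp add: dv)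
    have "(\<lambda>j. d (r j)) \<longlonglongrightarrow> 0" using LIMSEQ_subseq_LIMSEQ[OF dlim r] by (simp add: o_def)
    hence l1: "(\<lambda>j. - ((1/\<gamma>) *\<^sub>R d (r j))) \<longlonglongrightarrow> - ((1/\<gamma>) *\<^sub>R 0)"
      by (intro tendsto_intros)
    have l2: "(\<lambda>j. F (zb (r j))) \<longlonglongrightarrow> F x"
      using isCont_tendsto_compose[OF Fcont lim] by (simp add: o_def)
    have la: "(\<lambda>j. a (r j)) \<longlonglongrightarrow> - F x"
      using tendsto_diff[OF l1 l2] by (simp add: ak)
    have lz: "(\<lambda>j. zb (r j)) \<longlonglongrightarrow> x" using lim by (simp add: o_def)
    have "inner (- F x - v) (x - y) \<ge> 0" if "(y, v) \<in> graph_op A" for y v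
    proof -
      have vA: "v \<in> A y" using that by (simp add: graph_op_def)
      have "(\<lambda>j. inner (a (r j) - v) (zb (r j) - y)) \<longlonglongrightarrow> inner (- F x - v) (x - y)"
        by (intro tendsto_intros la lz)
      moreover have "\<forall>j. 0 \<le> inner (a (r j) - v) (zb (r j) - y)" using monoD[OF aA vA] by blast
      ultimately show ?thesis by (intro LIMSEQ_le_const) auto
    qed
    hence "- F x \<in> A x" using A_mm unfolding maximally_monotone_def by blast
    thus "x \<in> zer_op (op_plus_fun A F)" using zer_iff by blast
  qed
  have part4: "\<gamma> < 1 / L \<and> S = zer_op (op_plus_fun A F) \<longrightarrow>
            (\<exists>x \<in> zer_op (op_plus_fun A F). z \<longlonglongrightarrow> x \<and> zb \<longlonglongrightarrow> x)"
  proof (intro impI, elim conjE)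
    assume gs: "\<gamma> < 1 / L" and SZ: "S = zer_op (op_plus_fun A F)"
    have gL1: "\<gamma> * L < 1" using gs L_pos by (simp add: field_simps)
    define w where "w k = z k - zb k" for k
    have wb: "norm (w k) \<le> norm (d k) / (1 - \<gamma> * L)" for k
    proof -
      have "w k = - d k + \<gamma> *\<^sub>R (F (z k) - F (zb k))" by (simp add: w_def d_def algebra_simps)
      hence "norm (w k) \<le> norm (d k) + \<gamma> * norm (F (z k) - F (zb k))" using g0
        by (metis abs_of_pos norm_minus_cancel norm_scaleR norm_triangle_ineq)
      also have "\<dots> \<le> norm (d k) + \<gamma> * (L * norm (w k))" using Flip g0 by (simp add: mult_left_mono w_def)
      finally have "(1 - \<gamma> * L) * norm (w k) \<le> norm (d k)" by (simp add: algebra_simps)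
      thus ?thesis using gL1 by (simp add: field_simps)
    qed
    have wlim: "w \<longlonglongrightarrow> 0"
    proof (rule Lim_null_comparison)
      show "\<forall>\<^sub>F k in sequentially. norm (w k) \<le> norm (d k) / (1 - \<gamma> * L)" using wb by simp
      have "(\<lambda>k. norm (d k)) \<longlonglongrightarrow> 0" using dlim by (simp add: tendsto_norm_zero_iff)
      thus "(\<lambda>k. norm (d k) / (1 - \<gamma> * L)) \<longlonglongrightarrow> 0" using tendsto_divide_zero by blast
    qed
    have "bounded (range z)"
    proof -
      have "range z \<subseteq> cball zs (norm (z 0 - zs))"
        using zbnd by (auto simp: dist_norm norm_minus_commute)
      thus ?thesis using bounded_cball bounded_subset by blast
    qed
    then obtain x r where r: "strict_mono r" and lr: "(z \<circ> r) \<longlonglongrightarrow> x"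
      using bounded_imp_convergent_subsequence by blast
    have "(\<lambda>j. z (r j) - w (r j)) \<longlonglongrightarrow> x - 0"
      using tendsto_diff[OF lr[unfolded o_def] LIMSEQ_subseq_LIMSEQ[OF wlim r, unfolded o_def]] .
    hence "(zb \<circ> r) \<longlonglongrightarrow> x" by (simp add: w_def o_def)
    hence xz: "x \<in> zer_op (op_plus_fun A F)" using part3 r by blast
    hence xS: "x \<in> S" using SZ by simp
    have zl: "z \<longlonglongrightarrow> x"
    proof (rule LIMSEQ_I)
      fix e :: real assume "e > 0"
      then obtain N where N: "\<forall>n\<ge>N. norm ((z \<circ> r) n - x) < e" using LIMSEQ_D[OF lr] by blast
      have "norm (z n - x) < e" if "n \<ge> r N" for n
        using dec[OF xS that] N by (simp add: o_def) (smt (verit) order_refl)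
      thus "\<exists>no. \<forall>n\<ge>no. norm (z n - x) < e" by blast
    qed
    have "(\<lambda>k. z k - w k) \<longlonglongrightarrow> x - 0" using tendsto_diff[OF zl wlim] .
    hence "zb \<longlonglongrightarrow> x" by (simp add: w_def)
    thus "\<exists>x \<in> zer_op (op_plus_fun A F). z \<longlonglongrightarrow> x \<and> zb \<longlonglongrightarrow> x" using xz zl by blast
  qed
  show ?thesis using part1 part2 part3 part4 by blast
qed

end
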